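(* Let $R(3,n)$ be a rectangular supergrid graph with $n\ge 2$, let $s,t$ be two distinct vertices of it, and let $w=(1,1)$, $z=(2,1)$. Assume that the following conditions fail: (F1) $n=2$ and $s_x=t_x=2$ (i.e. $\{s,t\}$ is a vertex cut of $R(3,2)$); (F2) either $n=2$ and $\{s,t\}\in\{\{(1,1),(2,1)\},\{(1,1),(2,2)\},\{(2,1),(1,2)\}\}$, or $n\ge 3$ and $\{s,t\}=\{w,z\}$. If $s=z$ or $t=z$, then there exists a Hamiltonian $(s,t)$-path $Q$ of $R(3,n)$ such that the edge $(w,z)$ belongs to $Q$.
   Context: The rectangular supergrid graph $R(m,n)$ has vertex set $\{(x,y)\in\mathbb{Z}^2:1\le x\le m,\ 1\le y\le n\}$, two distinct vertices $u=(u_x,u_y)$, $v=(v_x,v_y)$ being adjacent iff $|u_x-v_x|\le 1$ and $|u_y-v_y|\le 1$. A Hamiltonian $(s,t)$-path is a simple path from $s$ to $t$ visiting every vertex exactly once. *)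

theory Defs
  imports Main
begin

type_synonym vertex = "int \<times> int"

definition supergrid_vertices :: "nat \<Rightarrow> nat \<Rightarrow> vertex set" where
  "supergrid_vertices m n = {(x, y). 1 \<le> x \<and> x \<le> int m \<and> 1 \<le> y \<and> y \<le> int n}"

definition supergrid_adj :: "nat \<Rightarrow> nat \<Rightarrow> vertex \<Rightarrow> vertex \<Rightarrow> bool" where
  "supergrid_adj m n u v \<longleftrightarrow> u \<in> supergrid_vertices m n \<and> v \<in> supergrid_vertices m n \<and> u \<noteq> v
     \<and> \<bar>fst u - fst v\<bar> \<le> 1 \<and> \<bar>snd u - snd v\<bar> \<le> 1"

definition is_path :: "nat \<Rightarrow> nat \<Rightarrow> vertex list \<Rightarrow> bool" where
  "is_path m n P \<longleftrightarrow> P \<noteq> [] \<and> distinct P \<and> set P \<subseteq> supergrid_vertices m n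
     \<and> (\<forall>i. Suc i < length P \<longrightarrow> supergrid_adj m n (P ! i) (P ! Suc i))"

definition ham_path :: "nat \<Rightarrow> nat \<Rightarrow> vertex \<Rightarrow> vertex \<Rightarrow> vertex list \<Rightarrow> bool" where
  "ham_path m n s t P \<longleftrightarrow> is_path m n P \<and> set P = supergrid_vertices m n
     \<and> hd P = s \<and> last P = t"

definition path_has_edge :: "vertex list \<Rightarrow> vertex \<Rightarrow> vertex \<Rightarrow> bool" where
  "path_has_edge P u v \<longleftrightarrow> (\<exists>i. Suc i < length P \<and>
     ((P ! i = u \<and> P ! Suc i = v) \<or> (P ! i = v \<and> P ! Suc i = u)))"

end

theory Submission
  imports Defs
begin


lemma is_path_succ: "is_path m n P \<longleftrightarrow> P \<noteq> [] \<and> distinct P \<and> set P \<subseteq> supergrid_vertices m n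
   \<and> successively (supergrid_adj m n) P"
  unfolding is_path_def successively_conv_nth by blast

lemma sv_0: "supergrid_vertices 3 0 = {}"
  by (auto simp: supergrid_vertices_def)

lemma sv_Suc: "supergrid_vertices 3 (Suc n) = supergrid_vertices 3 n \<union> {(1, int n + 1), (2, int n + 1), (3, int n + 1)}"
proof -
  have "\<And>x::int. 1 \<le> x \<Longrightarrow> x \<le> 3 \<Longrightarrow> x = 1 \<or> x = 2 \<or> x = 3" by arith
  then show ?thesis by (auto simp: supergrid_vertices_def)
qed

lemma sv_1: "supergrid_vertices 3 1 = {(1,1),(2,1),(3,1)}"
  using sv_Suc[of 0] sv_0 by simp

lemma sv_1': "supergrid_vertices 3 (Suc 0) = {(1,1),(2,1),(3,1)}"
  using sv_1 by simp

lemma sv_2: "supergrid_vertices 3 2 = {(1,1),(2,1),(3,1),(1,2),(2,2),(3,2)}"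
proof -
  have e: "(2::nat) = Suc 1" by simp
  have "supergrid_vertices 3 2 = supergrid_vertices 3 1 \<union> {(1, int 1 + 1),(2,int 1 + 1),(3,int 1 + 1)}"
    by (subst e, rule sv_Suc)
  then show ?thesis by (simp add: sv_1' insert_commute)
qed

lemma sv_3: "supergrid_vertices 3 3 = {(1,1),(2,1),(3,1),(1,2),(2,2),(3,2),(1,3),(2,3),(3,3)}"
proof -
  have e: "(3::nat) = Suc 2" by simp
  have "supergrid_vertices 3 3 = supergrid_vertices 3 2 \<union> {(1, int 2 + 1),(2,int 2 + 1),(3,int 2 + 1)}"
    by (subst (2) e, rule sv_Suc)
  then show ?thesis by (simp add: sv_2 insert_commute)
qed

definition topedge :: "nat \<Rightarrow> vertex list \<Rightarrow> bool" where
 "topedge n P \<longleftrightarrow> (\<exists>xs u v ys. P = xs @ u # v # ys \<and> snd u = int n \<and> snd v = int n)"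

lemma topedgeI: "P = xs @ u # v # ys \<Longrightarrow> snd u = int n \<Longrightarrow> snd v = int n \<Longrightarrow> topedge n P"
  unfolding topedge_def by blast

definition good :: "nat \<Rightarrow> vertex \<Rightarrow> vertex list \<Rightarrow> bool" where
 "good n t P \<longleftrightarrow> ham_path 3 n (2,1) t P \<and> (\<exists>rest. P = (2,1)#(1,1)#rest) \<and> topedge n P"

lemma goodI: "distinct P \<Longrightarrow> set P = supergrid_vertices 3 n \<Longrightarrow> successively (supergrid_adj 3 n) P
  \<Longrightarrow> P = (2,1)#(1,1)#rest \<Longrightarrow> last P = t \<Longrightarrow> topedge n P \<Longrightarrow> good n t P"
  unfolding good_def ham_path_def is_path_succ by auto

lemma b2a_old: "good 2 (3,1) [(2,1),(1,1),(1,2),(2,2),(3,2),(3,1)]"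
  apply (rule goodI)
  apply (simp_all add: sv_2 supergrid_adj_def)
  apply auto[1]
  apply (rule topedgeI[where xs="[(2,1),(1,1)]" and u="(1,2)" and v="(2,2)"]) apply simp_all
  done

lemma base0: "good 2 (3,1) [(2,1),(1,1),(1,2),(2,2),(3,2),(3,1)]"
  apply (rule goodI)
  apply (simp_all add: sv_2 supergrid_adj_def)
  apply auto[1]
  apply (rule topedgeI[where xs="[(2,1),(1,1)]" and u="(1,2)" and v="(2,2)"]) apply simp_all
  done

lemma base1: "good 2 (3,2) [(2,1),(1,1),(1,2),(2,2),(3,1),(3,2)]"
  apply (rule goodI)
  apply (simp_all add: sv_2 supergrid_adj_def)
  apply auto[1]
  apply (rule topedgeI[where xs="[(2,1),(1,1)]" and u="(1,2)" and v="(2,2)"]) apply simp_all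
  done

lemma base2: "good 3 (3,1) [(2,1),(1,1),(1,2),(1,3),(2,3),(3,3),(3,2),(2,2),(3,1)]"
  apply (rule goodI)
  apply (simp_all add: sv_3 supergrid_adj_def)
  apply auto[1]
  apply (rule topedgeI[where xs="[(2,1),(1,1),(1,2)]" and u="(1,3)" and v="(2,3)"]) apply simp_all
  done

lemma base3: "good 3 (1,2) [(2,1),(1,1),(2,2),(3,1),(3,2),(3,3),(2,3),(1,3),(1,2)]"
  apply (rule goodI)
  apply (simp_all add: sv_3 supergrid_adj_def)
  apply auto[1]
  apply (rule topedgeI[where xs="[(2,1),(1,1),(2,2),(3,1),(3,2)]" and u="(3,3)" and v="(2,3)"]) apply simp_all
  done

lemma base4: "good 3 (2,2) [(2,1),(1,1),(1,2),(1,3),(2,3),(3,3),(3,2),(3,1),(2,2)]"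
  apply (rule goodI)
  apply (simp_all add: sv_3 supergrid_adj_def)
  apply auto[1]
  apply (rule topedgeI[where xs="[(2,1),(1,1),(1,2)]" and u="(1,3)" and v="(2,3)"]) apply simp_all
  done

lemma base5: "good 3 (3,2) [(2,1),(1,1),(1,2),(1,3),(2,3),(3,3),(2,2),(3,1),(3,2)]"
  apply (rule goodI)
  apply (simp_all add: sv_3 supergrid_adj_def)
  apply auto[1]
  apply (rule topedgeI[where xs="[(2,1),(1,1),(1,2)]" and u="(1,3)" and v="(2,3)"]) apply simp_all
  done

lemma base6: "good 3 (1,3) [(2,1),(1,1),(1,2),(2,2),(3,1),(3,2),(3,3),(2,3),(1,3)]"
  apply (rule goodI)
  apply (simp_all add: sv_3 supergrid_adj_def)
  apply auto[1]
  apply (rule topedgeI[where xs="[(2,1),(1,1),(1,2),(2,2),(3,1),(3,2)]" and u="(3,3)" and v="(2,3)"]) apply simp_all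
  done

lemma base7: "good 3 (2,3) [(2,1),(1,1),(1,2),(1,3),(2,2),(3,1),(3,2),(3,3),(2,3)]"
  apply (rule goodI)
  apply (simp_all add: sv_3 supergrid_adj_def)
  apply auto[1]
  apply (rule topedgeI[where xs="[(2,1),(1,1),(1,2),(1,3),(2,2),(3,1),(3,2)]" and u="(3,3)" and v="(2,3)"]) apply simp_all
  done

lemma base8: "good 3 (3,3) [(2,1),(1,1),(1,2),(1,3),(2,3),(2,2),(3,1),(3,2),(3,3)]"
  apply (rule goodI)
  apply (simp_all add: sv_3 supergrid_adj_def)
  apply auto[1]
  apply (rule topedgeI[where xs="[(2,1),(1,1),(1,2)]" and u="(1,3)" and v="(2,3)"]) apply simp_all
  done


lemma baseN2: "n = 2 \<Longrightarrow> t = (3,1) \<or> t = (3,2) \<Longrightarrow> \<exists>P. good n t P"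
  using base0 base1 by blast

lemma baseN3: "n = 3 \<Longrightarrow> t \<in> supergrid_vertices 3 3 \<Longrightarrow> t \<noteq> (1,1) \<Longrightarrow> t \<noteq> (2,1) \<Longrightarrow> \<exists>P. good n t P"
  unfolding sv_3 using base2 base3 base4 base5 base6 base7 base8 by blast



lemma adj_mono: "supergrid_adj 3 n a b \<Longrightarrow> supergrid_adj 3 (Suc n) a b"
  by (auto simp: supergrid_adj_def sv_Suc)

lemma ham_parts:
  assumes "good n t P"
  shows "distinct P" "set P = supergrid_vertices 3 n" "successively (supergrid_adj 3 n) P" "last P = t"
    "\<exists>rest. P = (2,1)#(1,1)#rest" "topedge n P"
  using assms unfolding good_def ham_path_def is_path_succ by auto

lemma detour:
  assumes g: "good n t P" and n2: "n \<ge> 2"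
  shows "\<exists>P'. good (Suc n) t P'"
proof -
  note hp = ham_parts[OF g]
  obtain rest where Pr: "P = (2,1)#(1,1)#rest" using hp(5) by blast
  obtain xs u v ys where Pe: "P = xs @ u # v # ys" and su: "snd u = int n" and sv: "snd v = int n"
    using hp(6) unfolding topedge_def by blast
  have uv: "supergrid_adj 3 n u v" using hp(3) Pe by (simp add: successively_append_iff)
  have uvc: "(u = (1, int n) \<and> v = (2, int n)) \<or> (u = (2, int n) \<and> v = (1, int n))
     \<or> (u = (2, int n) \<and> v = (3, int n)) \<or> (u = (3, int n) \<and> v = (2, int n))"
  proof -
    obtain a where ua: "u = (a, int n)" using su by (metis prod.collapse)
    obtain b where vb: "v = (b, int n)" using sv by (metis prod.collapse)
    have "1 \<le> a" "a \<le> 3" "1 \<le> b" "b \<le> 3" "a \<noteq> b" "\<bar>a - b\<bar> \<le> 1"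
      using uv unfolding ua vb supergrid_adj_def supergrid_vertices_def by auto
    then have "(a = 1 \<and> b = 2) \<or> (a = 2 \<and> b = 1) \<or> (a = 2 \<and> b = 3) \<or> (a = 3 \<and> b = 2)" by arith
    then show ?thesis using ua vb by auto
  qed
  have eq: "xs @ u # v # ys = (2,1)#(1,1)#rest" using Pr Pe by simp
  have "\<exists>xs'. xs = (2,1)#(1,1)#xs'"
  proof (cases xs)
    case Nil then show ?thesis using eq su n2 by auto
  next
    case (Cons a xs1)
    then show ?thesis
    proof (cases xs1)
      case Nil then show ?thesis using eq su n2 \<open>xs = a # xs1\<close> by auto
    next
      case (Cons b xs2) then show ?thesis using eq \<open>xs = a # xs1\<close> by auto
    qed
  qed
  then obtain xs' where xs': "xs = (2,1)#(1,1)#xs'" by blast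
  define L where "L = [(1::int, int n + 1), (2, int n + 1), (3, int n + 1)]"
  define D where "D = (if fst u < fst v then L else rev L)"
  define P' where "P' = xs @ u # D @ v # ys"
  have setD: "set D = {(1, int n + 1), (2, int n + 1), (3, int n + 1)}" unfolding D_def L_def by auto
  have disj: "set D \<inter> set P = {}" unfolding setD hp(2) by (auto simp: supergrid_vertices_def)
  have distD: "distinct D" unfolding D_def L_def by auto
  have "distinct P'" using hp(1) disj distD unfolding P'_def Pe by auto
  moreover have "set P' = supergrid_vertices 3 (Suc n)"
    using hp(2) unfolding sv_Suc P'_def Pe setD[symmetric] by auto
  moreover have "successively (supergrid_adj 3 (Suc n)) P'"
  proof -
    have s1: "successively (supergrid_adj 3 (Suc n)) P"
      using hp(3) by (rule successively_mono) (simp add: adj_mono)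
    have a: "successively (supergrid_adj 3 (Suc n)) (xs @ [u])"
      and b: "successively (supergrid_adj 3 (Suc n)) (v # ys)"
      using s1 unfolding Pe by (auto simp: successively_append_iff)
    have c: "successively (supergrid_adj 3 (Suc n)) D" "supergrid_adj 3 (Suc n) u (hd D)"
      "supergrid_adj 3 (Suc n) (last D) v"
      using uvc n2 unfolding D_def L_def by (auto simp: supergrid_adj_def sv_Suc supergrid_vertices_def)
    have dne: "D \<noteq> []" unfolding D_def L_def by simp
    have e: "P' = (xs @ [u]) @ (D @ (v # ys))" unfolding P'_def by simp
    have d: "successively (supergrid_adj 3 (Suc n)) (D @ (v # ys))"
      using c(1) b c(3) dne by (simp add: successively_append_iff)
    have h1: "hd (D @ (v # ys)) = hd D" using dne by simp
    have h2: "last (xs @ [u]) = u" by simp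
    show ?thesis unfolding e
      by (rule successively_append_iff[THEN iffD2]) (use a d c(2) h1 h2 in metis)
  qed
  moreover have "P' = (2,1)#(1,1)#(xs' @ u # D @ v # ys)" unfolding P'_def xs' by simp
  moreover have "last P' = t" using hp(4) unfolding P'_def Pe by simp
  moreover have "topedge (Suc n) P'"
  proof (cases "fst u < fst v")
    case True
    then have "P' = (xs @ [u]) @ (1, int n + 1) # (2, int n + 1) # ((3, int n + 1) # v # ys)"
      unfolding P'_def D_def L_def by simp
    then show ?thesis by (rule topedgeI) simp_all
  next
    case False
    then have "P' = (xs @ [u, (3, int n + 1)]) @ (2, int n + 1) # (1, int n + 1) # (v # ys)"
      unfolding P'_def D_def L_def by simp
    then show ?thesis by (rule topedgeI) simp_all
  qed
  ultimately show ?thesis by (blast intro: goodI)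
qed



lemma extend_gen:
  assumes g: "good n (3, int n) P" and n2: "n \<ge> 2"
    and sB: "set B = {(1, int n + 1), (2, int n + 1), (3, int n + 1), (1, int n + 2), (2, int n + 2), (3, int n + 2)}"
    and dB: "distinct B" and aB: "successively (supergrid_adj 3 (Suc (Suc n))) B"
    and hB: "hd B = (3, int n + 1)" and nB: "B \<noteq> []" and lB: "last B = t'"
    and tB: "topedge (Suc (Suc n)) B"
  shows "good (Suc (Suc n)) t' (P @ B)"
proof -
  note hp = ham_parts[OF g]
  obtain rest where Pr: "P = (2,1)#(1,1)#rest" using hp(5) by blast
  have disj0: "set B \<inter> supergrid_vertices 3 n = {}" unfolding sB by (simp add: supergrid_vertices_def)
  have disj: "set B \<inter> set P = {}" using disj0 hp(2) by simp
  have "distinct (P @ B)" using hp(1) dB disj by auto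
  moreover have "set (P @ B) = supergrid_vertices 3 (Suc (Suc n))"
  proof -
    have e: "int (Suc n) + 1 = int n + 2" by simp
    show ?thesis
      using hp(2) sB sv_Suc[of n] sv_Suc[of "Suc n", unfolded e] by (simp add: Un_assoc insert_commute)
  qed
  moreover have "successively (supergrid_adj 3 (Suc (Suc n))) (P @ B)"
  proof -
    have s1: "successively (supergrid_adj 3 (Suc (Suc n))) P"
      using hp(3) by (rule successively_mono) (simp add: adj_mono)
    have j: "supergrid_adj 3 (Suc (Suc n)) (last P) (hd B)"
      unfolding hp(4) hB using n2 by (auto simp: supergrid_adj_def sv_Suc supergrid_vertices_def)
    show ?thesis
      by (rule successively_append_iff[THEN iffD2]) (use s1 aB j in metis)
  qed
  moreover have "P @ B = (2,1)#(1,1)#(rest @ B)" using Pr by simp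
  moreover have "last (P @ B) = t'" using lB nB by simp
  moreover have "topedge (Suc (Suc n)) (P @ B)"
  proof -
    obtain xs u v ys where "B = xs @ u # v # ys" "snd u = int (Suc (Suc n))" "snd v = int (Suc (Suc n))"
      using tB unfolding topedge_def by blast
    then show ?thesis by (intro topedgeI[where xs="P @ xs" and u=u and v=v and ys=ys]) auto
  qed
  ultimately show ?thesis by (blast intro: goodI)
qed

lemma extend1:
  assumes g: "good n (3, int n) P" and n2: "n \<ge> 2"
  shows "good (Suc (Suc n)) (1, int n + 2) (P @ [(3,int n+1),(3,int n+2),(2,int n+2),(2,int n+1),(1,int n+1),(1,int n+2)])"
  apply (rule extend_gen[OF g n2])
  subgoal by auto
  subgoal by auto
  subgoal using n2 by (simp add: supergrid_adj_def supergrid_vertices_def)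
  subgoal by simp
  subgoal by simp
  subgoal by simp
  subgoal by (rule topedgeI[where xs="[(3,int n+1)]" and u="(3,int n+2)" and v="(2,int n+2)"]) simp_all
  done

lemma extend2:
  assumes g: "good n (3, int n) P" and n2: "n \<ge> 2"
  shows "good (Suc (Suc n)) (2, int n + 2) (P @ [(3,int n+1),(3,int n+2),(2,int n+1),(1,int n+1),(1,int n+2),(2,int n+2)])"
  apply (rule extend_gen[OF g n2])
  subgoal by auto
  subgoal by auto
  subgoal using n2 by (simp add: supergrid_adj_def supergrid_vertices_def)
  subgoal by simp
  subgoal by simp
  subgoal by simp
  subgoal by (rule topedgeI[where xs="[(3,int n+1),(3,int n+2),(2,int n+1),(1,int n+1)]" and u="(1,int n+2)" and v="(2,int n+2)"]) simp_all
  done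

lemma extend3:
  assumes g: "good n (3, int n) P" and n2: "n \<ge> 2"
  shows "good (Suc (Suc n)) (3, int n + 2) (P @ [(3,int n+1),(2,int n+1),(1,int n+1),(1,int n+2),(2,int n+2),(3,int n+2)])"
  apply (rule extend_gen[OF g n2])
  subgoal by auto
  subgoal by auto
  subgoal using n2 by (simp add: supergrid_adj_def supergrid_vertices_def)
  subgoal by simp
  subgoal by simp
  subgoal by simp
  subgoal by (rule topedgeI[where xs="[(3,int n+1),(2,int n+1),(1,int n+1)]" and u="(1,int n+2)" and v="(2,int n+2)"]) simp_all
  done

lemma extend:
  assumes g: "good n (3, int n) P" and n2: "n \<ge> 2" and b: "b = 1 \<or> b = 2 \<or> b = 3"
  shows "\<exists>P'. good (Suc (Suc n)) (b, int n + 2) P'"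
  using b extend1[OF g n2] extend2[OF g n2] extend3[OF g n2] by blast



definition allowed :: "nat \<Rightarrow> vertex \<Rightarrow> bool" where
  "allowed n t \<longleftrightarrow> t \<in> supergrid_vertices 3 n \<and> t \<noteq> (1,1) \<and> t \<noteq> (2,1) \<and> (n = 2 \<longrightarrow> t = (3,1) \<or> t = (3,2))"

lemma main: "n \<ge> 2 \<Longrightarrow> allowed n t \<Longrightarrow> \<exists>P. good n t P"
proof (induction n arbitrary: t rule: less_induct)
  case (less n)
  consider "n = 2" | "n = 3" | "n \<ge> 4" using less.prems(1) by linarith
  then show ?case
  proof cases
    case 1
    then show ?thesis using less.prems(2) baseN2 unfolding allowed_def by blast
  next
    case 2
    then show ?thesis using less.prems(2) baseN3 unfolding allowed_def by blast
  next
    case 3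
    obtain m where m: "n = Suc m" using 3 by (cases n) auto
    have tin: "t \<in> supergrid_vertices 3 n" using less.prems(2) unfolding allowed_def by blast
    show ?thesis
    proof (cases "snd t < int n")
      case True
      have "t \<in> supergrid_vertices 3 m"
        using tin True unfolding m sv_Suc by auto
      then have "allowed m t" using less.prems(2) 3 m unfolding allowed_def by auto
      then obtain P where "good m t P" using less.IH[of m t] 3 m by auto
      then show ?thesis using detour[of m t P] 3 m by auto
    next
      case False
      obtain k where k: "n = Suc (Suc k)" using 3 by (cases n; cases "n - 1") auto
      have k2: "k \<ge> 2" using 3 k by auto
      have "allowed k (3, int k)" unfolding allowed_def using k2
        by (auto simp: supergrid_vertices_def)
      then obtain P where P: "good k (3, int k) P" using less.IH[of k] k k2 by auto
      obtain a b where t: "t = (a, b)" by (cases t)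
      have "b = int n" "1 \<le> a" "a \<le> 3" using tin False unfolding t supergrid_vertices_def by auto
      then have "b = int k + 2" "a = 1 \<or> a = 2 \<or> a = 3" using k by auto
      then show ?thesis using extend[OF P k2, of a] k t by auto
    qed
  qed
qed

lemma rev_ham: "ham_path 3 n s t P \<Longrightarrow> ham_path 3 n t s (rev P)"
  unfolding ham_path_def is_path_succ
  by (auto simp: hd_rev last_rev supergrid_adj_def intro: successively_mono)

lemma has_edge: "path_has_edge (xs @ a # b # ys) a b" "path_has_edge (xs @ a # b # ys) b a"
  unfolding path_has_edge_def
  by (rule exI[of _ "length xs"], simp add: nth_append)+

theorem lemma5:
  fixes n :: nat and s t :: vertex
  defines "w \<equiv> (1, 1) :: vertex" and "z \<equiv> (2, 1) :: vertex"
  assumes n2: "n \<ge> 2"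
    and s_in: "s \<in> supergrid_vertices 3 n" and t_in: "t \<in> supergrid_vertices 3 n"
    and st: "s \<noteq> t"
    and notF1: "\<not> (n = 2 \<and> fst s = 2 \<and> fst t = 2)"
    and notF2: "\<not> ((n = 2 \<and> {s, t} \<in> {{(1,1),(2,1)}, {(1,1),(2,2)}, {(2,1),(1,2)}})
                    \<or> (n \<ge> 3 \<and> {s, t} = {w, z}))"
    and sz: "s = z \<or> t = z"
  shows "\<exists>Q. ham_path 3 n s t Q \<and> path_has_edge Q w z"
proof (cases "s = z")
  case True
  have "allowed n t"
  proof -
    have h1: "t \<noteq> (1,1)" using True notF2 st n2 unfolding w_def z_def by (auto simp: insert_commute)
    moreover have h2: "t \<noteq> (2,1)" using True st unfolding z_def by auto
    moreover have "n = 2 \<longrightarrow> t = (3,1) \<or> t = (3,2)"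
    proof
      assume n: "n = 2"
      have "t \<in> {(1,1),(2,1),(3,1),(1,2),(2,2),(3,2)}" using t_in n sv_2 by simp
      moreover have "t \<noteq> (1,2)" using True notF2 n unfolding z_def by auto
      moreover have "t \<noteq> (2,2)" using True notF1 n unfolding z_def by auto
      ultimately show "t = (3,1) \<or> t = (3,2)" using h1 h2 by auto
    qed
    ultimately show ?thesis using t_in unfolding allowed_def by blast
  qed
  then obtain P where P: "good n t P" using main n2 by blast
  then obtain rest where "P = (2,1)#(1,1)#rest" unfolding good_def by blast
  then have "path_has_edge P w z" using has_edge(2)[of "[]" "(2,1)" "(1,1)" rest] unfolding w_def z_def by simp
  then show ?thesis using P True unfolding good_def z_def by blast
next
  case False
  then have tz: "t = z" using sz by simp
  have "allowed n s"
  proof -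
    have h1: "s \<noteq> (1,1)" using tz notF2 st n2 unfolding w_def z_def by (auto simp: insert_commute)
    moreover have h2: "s \<noteq> (2,1)" using tz st unfolding z_def by auto
    moreover have "n = 2 \<longrightarrow> s = (3,1) \<or> s = (3,2)"
    proof
      assume n: "n = 2"
      have "s \<in> {(1,1),(2,1),(3,1),(1,2),(2,2),(3,2)}" using s_in n sv_2 by simp
      moreover have "s \<noteq> (1,2)" using tz notF2 n unfolding z_def by (auto simp: insert_commute)
      moreover have "s \<noteq> (2,2)" using tz notF1 n unfolding z_def by auto
      ultimately show "s = (3,1) \<or> s = (3,2)" using h1 h2 by auto
    qed
    ultimately show ?thesis using s_in unfolding allowed_def by blast
  qed
  then obtain P where P: "good n s P" using main n2 by blast
  then obtain rest where Pr: "P = (2,1)#(1,1)#rest" unfolding good_def by blast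
  have "ham_path 3 n s t (rev P)" using P rev_ham tz unfolding good_def z_def by blast
  moreover have "rev P = rev rest @ (1,1) # (2,1) # []" using Pr by simp
  then have "path_has_edge (rev P) w z" using has_edge(1)[of "rev rest" "(1,1)" "(2,1)" "[]"]
    unfolding w_def z_def by simp
  ultimately show ?thesis by blast
qed

end
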